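(* Let $w_1,\dots,w_n\ge0$, not all zero, and $a_1,\dots,a_n\in\mathbb R$. Let $R(t)=\sum_{i\le n}w_i\exp(a_it)$, $K(t)=\log R(t)$, $v_i(t)=w_i\exp(a_it)/R(t)$ and $\bar a(t)=\sum_{i\le n}v_i(t)a_i$. (i) $K$ is convex, with $$K'(t)=\bar a(t),\quad K''(t)=\sum_{i\le n}v_i(t)\{a_i-\bar a(t)\}^2,\quad K'''(t)=\sum_{i\le n}v_i(t)\{a_i-\bar a(t)\}^3.$$ (ii) For all $t$, $$\log\Big\{\sum_{i\le n}w_ie^{a_it}\Big\}-\log\Big\{\sum_{i\le n}w_i\Big\}=\bar a(0)t+\tfrac12\sum_{i\le n}v_i(0)\{a_i-\bar a(0)\}^2t^2+v(t),$$ where $v_i(0)=w_i/\sum_{j\le n}w_j$, and the remainder satisfies $$|v(t)|\le\tfrac43\mu_n^3|t|^3,\qquad |v(t)|\le\tfrac23 g(\mu_n|t|)\sum_{i\le n}v_i(0)\{a_i-\bar a(0)\}^2|t|^2,$$ with $\mu_n=\max_{i\le n}|a_i-\bar a(0)|$ and $g(u)=u\exp(2u+4u^2)$. *)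

theory Defs
  imports "HOL-Analysis.Analysis"
begin

text \<open>Indices i = 1..n of the paper are rendered as i < n (i.e. 0..n-1).\<close>

definition Rf :: "nat \<Rightarrow> (nat \<Rightarrow> real) \<Rightarrow> (nat \<Rightarrow> real) \<Rightarrow> real \<Rightarrow> real" where
  "Rf n w a t = (\<Sum>i<n. w i * exp (a i * t))"

definition Kf :: "nat \<Rightarrow> (nat \<Rightarrow> real) \<Rightarrow> (nat \<Rightarrow> real) \<Rightarrow> real \<Rightarrow> real" where
  "Kf n w a t = ln (Rf n w a t)"

definition vf :: "nat \<Rightarrow> (nat \<Rightarrow> real) \<Rightarrow> (nat \<Rightarrow> real) \<Rightarrow> nat \<Rightarrow> real \<Rightarrow> real" where
  "vf n w a i t = w i * exp (a i * t) / Rf n w a t"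

definition abar :: "nat \<Rightarrow> (nat \<Rightarrow> real) \<Rightarrow> (nat \<Rightarrow> real) \<Rightarrow> real \<Rightarrow> real" where
  "abar n w a t = (\<Sum>i<n. vf n w a i t * a i)"

definition gfun :: "real \<Rightarrow> real" where
  "gfun u = u * exp (2 * u + 4 * u ^ 2)"

end

theory Submission
  imports Defs
begin

lemma Rf_pos:
  assumes "\<And>i. i < n \<Longrightarrow> w i \<ge> 0" "\<exists>i<n. w i \<noteq> 0"
  shows "Rf n w a t > 0"
proof -
  obtain j where j: "j < n" "w j \<noteq> 0" using assms(2) by blast
  have "w j * exp (a j * t) > 0" using j assms(1)[of j] by (simp add: order.not_eq_order_implies_strict)
  also have "w j * exp (a j * t) \<le> (\<Sum>i<n. w i * exp (a i * t))"
    by (rule member_le_sum) (use j assms(1) in auto)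
  finally show ?thesis unfolding Rf_def .
qed

lemma Rf_deriv: "(Rf n w a has_real_derivative (\<Sum>i<n. w i * a i * exp (a i * t))) (at t)"
  unfolding Rf_def
  by (auto intro!: derivative_eq_intros sum.cong simp: mult.commute mult.left_commute)

lemma abar_eq:
  "abar n w a t = (\<Sum>i<n. w i * a i * exp (a i * t)) / Rf n w a t"
  unfolding abar_def vf_def sum_divide_distrib by (rule sum.cong) auto

lemma sum_vf:
  assumes "Rf n w a t > 0"
  shows "(\<Sum>i<n. vf n w a i t) = 1"
  using assms unfolding vf_def sum_divide_distrib[symmetric] Rf_def by simp

lemma vf_nonneg:
  assumes "\<And>i. i < n \<Longrightarrow> w i \<ge> 0" "Rf n w a t > 0" "i < n"
  shows "vf n w a i t \<ge> 0"
  using assms unfolding vf_def by simp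

lemma sum_vf_centered:
  assumes "Rf n w a t > 0"
  shows "(\<Sum>i<n. vf n w a i t * (a i - abar n w a t)) = 0"
proof -
  have "(\<Sum>i<n. vf n w a i t * (a i - abar n w a t)) = (\<Sum>i<n. vf n w a i t * a i) - (\<Sum>i<n. vf n w a i t) * abar n w a t"
    by (simp add: algebra_simps sum_subtractf sum_distrib_right sum_distrib_left)
  also have "\<dots> = 0" using sum_vf[OF assms] by (simp add: abar_def)
  finally show ?thesis .
qed

lemma vf_deriv:
  assumes "Rf n w a t > 0"
  shows "((\<lambda>s. vf n w a i s) has_real_derivative vf n w a i t * (a i - abar n w a t)) (at t)"
proof -
  have "((\<lambda>s. w i * exp (a i * s) / Rf n w a s) has_real_derivative
     ((w i * (exp (a i * t) * a i)) * Rf n w a t - w i * exp (a i * t) * (\<Sum>i<n. w i * a i * exp (a i * t))) / (Rf n w a t * Rf n w a t)) (at t)"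
    using assms by (intro DERIV_divide Rf_deriv) (auto intro!: derivative_eq_intros)
  moreover have "((w i * (exp (a i * t) * a i)) * Rf n w a t - w i * exp (a i * t) * (\<Sum>i<n. w i * a i * exp (a i * t))) / (Rf n w a t * Rf n w a t)
     = vf n w a i t * (a i - abar n w a t)"
    using assms unfolding vf_def abar_eq by (simp add: field_simps)
  ultimately show ?thesis unfolding vf_def by simp
qed


lemma abar_deriv:
  assumes pos: "\<And>t. Rf n w a t > 0"
  shows "(abar n w a has_real_derivative (\<Sum>i<n. vf n w a i t * (a i - abar n w a t) ^ 2)) (at t)"
proof -
  have "((\<lambda>s. \<Sum>i<n. vf n w a i s * a i) has_real_derivative (\<Sum>i<n. vf n w a i t * (a i - abar n w a t) * a i)) (at t)"
    by (intro DERIV_sum DERIV_cmult_right vf_deriv pos)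
  moreover have "(\<Sum>i<n. vf n w a i t * (a i - abar n w a t) * a i) = (\<Sum>i<n. vf n w a i t * (a i - abar n w a t) ^ 2)
       + (\<Sum>i<n. vf n w a i t * (a i - abar n w a t)) * abar n w a t"
  proof -
    have "(\<Sum>i<n. vf n w a i t * (a i - abar n w a t) * a i) = (\<Sum>i<n. vf n w a i t * (a i - abar n w a t) ^ 2
       + vf n w a i t * (a i - abar n w a t) * abar n w a t)"
      by (rule sum.cong) (simp_all add: power2_eq_square algebra_simps)
    thus ?thesis by (simp add: sum.distrib sum_distrib_right)
  qed
  ultimately show ?thesis using sum_vf_centered[OF pos] unfolding abar_def[abs_def] by simp
qed

lemma S2_deriv:
  assumes pos: "\<And>t. Rf n w a t > 0"
  shows "((\<lambda>s. \<Sum>i<n. vf n w a i s * (a i - abar n w a s) ^ 2) has_real_derivative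
              (\<Sum>i<n. vf n w a i t * (a i - abar n w a t) ^ 3)) (at t)"
proof -
  define S2 where "S2 = (\<Sum>i<n. vf n w a i t * (a i - abar n w a t) ^ 2)"
  have "((\<lambda>s. \<Sum>i<n. vf n w a i s * (a i - abar n w a s) ^ 2) has_real_derivative
     (\<Sum>i<n. vf n w a i t * (a i - abar n w a t) * (a i - abar n w a t) ^ 2
       + vf n w a i t * (of_nat 2 * (a i - abar n w a t) ^ (2 - 1) * (0 - S2)))) (at t)"
    unfolding S2_def
    by (intro DERIV_sum DERIV_cong[OF DERIV_mult[OF vf_deriv[OF pos] DERIV_power[OF DERIV_diff[OF DERIV_const abar_deriv[OF pos]]]]])
      (simp add: algebra_simps)
  moreover have "(\<Sum>i<n. vf n w a i t * (a i - abar n w a t) * (a i - abar n w a t) ^ 2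
       + vf n w a i t * (of_nat 2 * (a i - abar n w a t) ^ (2 - 1) * (0 - S2)))
     = (\<Sum>i<n. vf n w a i t * (a i - abar n w a t) ^ 3) - 2 * S2 * (\<Sum>i<n. vf n w a i t * (a i - abar n w a t))"
    by (simp add: sum_distrib_left sum.distrib sum_subtractf power2_eq_square power3_eq_cube algebra_simps)
  ultimately show ?thesis using sum_vf_centered[OF pos] by simp
qed

lemma K_deriv:
  assumes pos: "\<And>t. Rf n w a t > 0"
  shows "(Kf n w a has_real_derivative abar n w a t) (at t)"
proof -
  have "((\<lambda>s. ln (Rf n w a s)) has_real_derivative (\<Sum>i<n. w i * a i * exp (a i * t)) / Rf n w a t) (at t)"
    using pos Rf_deriv by (auto intro!: derivative_eq_intros simp: divide_simps)
  then show ?thesis unfolding Kf_def[abs_def] abar_eq .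
qed

lemma abar_mono:
  assumes pos: "\<And>t. Rf n w a t > 0" and wn: "\<And>i. i < n \<Longrightarrow> w i \<ge> 0"
  shows "x \<le> y \<Longrightarrow> abar n w a x \<le> abar n w a y"
  by (rule DERIV_nonneg_imp_nondecreasing, assumption, rule exI, rule conjI, rule abar_deriv[OF pos])
     (auto intro!: sum_nonneg mult_nonneg_nonneg vf_nonneg wn pos)

lemma K_convex:
  assumes pos: "\<And>t. Rf n w a t > 0" and wn: "\<And>i. i < n \<Longrightarrow> w i \<ge> 0"
  shows "convex_on UNIV (Kf n w a)"
  by (rule convex_on_realI[where f'="abar n w a"]) (auto intro: K_deriv pos abar_mono wn)


lemma vf0: "vf n w a i 0 = w i / (\<Sum>j<n. w j)"
  unfolding vf_def Rf_def by simp

lemma abar_dev: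
  assumes pos: "\<And>t. Rf n w a t > 0" and wn: "\<And>i. i < n \<Longrightarrow> w i \<ge> 0"
    and mu: "\<And>i. i < n \<Longrightarrow> \<bar>a i - c\<bar> \<le> mu"
  shows "\<bar>abar n w a x - c\<bar> \<le> mu"
proof -
  have "(\<Sum>i<n. vf n w a i x * (a i - c)) = (\<Sum>i<n. vf n w a i x * a i) - (\<Sum>i<n. vf n w a i x) * c"
    by (simp add: right_diff_distrib sum_subtractf sum_distrib_right)
  hence "abar n w a x - c = (\<Sum>i<n. vf n w a i x * (a i - c))"
    using sum_vf[OF pos, of x] unfolding abar_def by simp
  also have "\<bar>\<dots>\<bar> \<le> (\<Sum>i<n. vf n w a i x * mu)"
    by (rule order.trans[OF sum_abs], rule sum_mono)
       (simp add: abs_mult vf_nonneg[OF wn pos] mu mult_left_mono)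
  also have "\<dots> = mu" using sum_vf[OF pos, of x] by (simp add: sum_distrib_right[symmetric])
  finally show ?thesis .
qed

lemma Rf_lower:
  assumes pos: "\<And>t. Rf n w a t > 0" and wn: "\<And>i. i < n \<Longrightarrow> w i \<ge> 0"
  shows "Rf n w a x \<ge> Rf n w a 0 * exp (abar n w a 0 * x)"
proof -
  define c where "c = abar n w a 0"
  define W where "W = Rf n w a 0"
  have W: "W > 0" using pos unfolding W_def .
  have wi: "w i = W * vf n w a i 0" for i using W unfolding vf_def W_def by simp
  have "Rf n w a x = W * exp (c * x) * (\<Sum>i<n. vf n w a i 0 * exp ((a i - c) * x))"
    unfolding Rf_def sum_distrib_left
    by (rule sum.cong[OF refl]) (simp add: wi algebra_simps exp_diff exp_add[symmetric] left_diff_distrib)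
  also have "\<dots> \<ge> W * exp (c * x) * (\<Sum>i<n. vf n w a i 0 * (1 + (a i - c) * x))"
    using W by (intro mult_left_mono sum_mono) (auto intro!: mult_left_mono vf_nonneg[OF wn pos] exp_ge_add_one_self)
  also have "(\<Sum>i<n. vf n w a i 0 * (1 + (a i - c) * x)) = (\<Sum>i<n. vf n w a i 0) + (\<Sum>i<n. vf n w a i 0 * (a i - c)) * x"
    by (simp only: distrib_left mult_1_right sum.distrib sum_distrib_right mult.assoc)
  also have "\<dots> = 1" using sum_vf[OF pos] sum_vf_centered[OF pos] unfolding c_def by simp
  finally show ?thesis unfolding W_def c_def by simp
qed

lemma vf_bound:
  assumes pos: "\<And>t. Rf n w a t > 0" and wn: "\<And>i. i < n \<Longrightarrow> w i \<ge> 0"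
    and mu: "\<And>i. i < n \<Longrightarrow> \<bar>a i - abar n w a 0\<bar> \<le> mu" and i: "i < n"
  shows "vf n w a i x \<le> vf n w a i 0 * exp (mu * \<bar>x\<bar>)"
proof -
  define c where "c = abar n w a 0"
  define W where "W = Rf n w a 0"
  have W: "W > 0" using pos unfolding W_def .
  have L: "Rf n w a x \<ge> W * exp (c * x)" using Rf_lower[OF pos wn] unfolding W_def c_def .
  have "vf n w a i x = w i * exp (a i * x) / Rf n w a x" unfolding vf_def ..
  also have "\<dots> \<le> w i * exp (a i * x) / (W * exp (c * x))"
    using W L wn[OF i] pos[of x] by (intro divide_left_mono) auto
  also have "\<dots> = vf n w a i 0 * exp ((a i - c) * x)"
    unfolding vf_def W_def by (simp add: left_diff_distrib exp_diff)
  also have "\<dots> \<le> vf n w a i 0 * exp (mu * \<bar>x\<bar>)"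
  proof (intro mult_left_mono vf_nonneg[OF wn pos i])
    have "(a i - c) * x \<le> \<bar>a i - c\<bar> * \<bar>x\<bar>" by (metis abs_ge_self abs_mult)
    also have "\<dots> \<le> mu * \<bar>x\<bar>" using mu[OF i] unfolding c_def by (simp add: mult_right_mono)
    finally show "exp ((a i - c) * x) \<le> exp (mu * \<bar>x\<bar>)" by simp
  qed
  finally show ?thesis .
qed


lemma S3_bounds:
  assumes pos: "\<And>t. Rf n w a t > 0" and wn: "\<And>i. i < n \<Longrightarrow> w i \<ge> 0"
    and mu: "\<And>i. i < n \<Longrightarrow> \<bar>a i - abar n w a 0\<bar> \<le> mu"
  shows "\<bar>\<Sum>i<n. vf n w a i x * (a i - abar n w a x) ^ 3\<bar> \<le> 8 * mu ^ 3"
    and "\<bar>\<Sum>i<n. vf n w a i x * (a i - abar n w a x) ^ 3\<bar>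
          \<le> 2 * mu * exp (mu * \<bar>x\<bar>) * (\<Sum>i<n. vf n w a i 0 * (a i - abar n w a 0) ^ 2)"
proof -
  define c where "c = abar n w a 0"
  define b where "b = abar n w a x"
  define v where "v i = vf n w a i x" for i
  have v0: "v i \<ge> 0" if "i < n" for i unfolding v_def using vf_nonneg[OF wn pos that] .
  have sv: "(\<Sum>i<n. v i) = 1" unfolding v_def using sum_vf[OF pos] .
  have svd: "(\<Sum>i<n. v i * (a i - b)) = 0" unfolding v_def b_def using sum_vf_centered[OF pos] .
  have bd: "\<bar>b - c\<bar> \<le> mu" unfolding b_def c_def using abar_dev[OF pos wn mu] .
  have mu0: "mu \<ge> 0" using bd by linarith
  have d: "\<bar>a i - b\<bar> \<le> 2 * mu" if "i < n" for i using mu[OF that] bd unfolding c_def by linarith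
  have A: "\<bar>\<Sum>i<n. v i * (a i - b) ^ 3\<bar> \<le> (\<Sum>i<n. v i * (2 * mu * (a i - b) ^ 2))"
  proof (rule order.trans[OF sum_abs], rule sum_mono)
    fix i assume "i \<in> {..<n}"
    hence i: "i < n" by simp
    have "\<bar>v i * (a i - b) ^ 3\<bar> = v i * (a i - b) ^ 2 * \<bar>a i - b\<bar>"
      using v0[OF i] by (simp add: abs_mult power3_eq_cube power2_eq_square)
    also have "\<dots> \<le> v i * (a i - b) ^ 2 * (2 * mu)"
      using v0[OF i] d[OF i] by (intro mult_left_mono) auto
    finally show "\<bar>v i * (a i - b) ^ 3\<bar> \<le> v i * (2 * mu * (a i - b) ^ 2)" by (simp add: algebra_simps)
  qed
  show "\<bar>\<Sum>i<n. vf n w a i x * (a i - abar n w a x) ^ 3\<bar> \<le> 8 * mu ^ 3"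
  proof -
    have "\<bar>\<Sum>i<n. v i * (a i - b) ^ 3\<bar> \<le> (\<Sum>i<n. v i * (8 * mu ^ 3))"
    proof (rule order.trans[OF sum_abs], rule sum_mono)
      fix i assume "i \<in> {..<n}"
      hence i: "i < n" by simp
      have "\<bar>a i - b\<bar> ^ 3 \<le> (2 * mu) ^ 3" by (rule power_mono[OF d[OF i]]) simp
      thus "\<bar>v i * (a i - b) ^ 3\<bar> \<le> v i * (8 * mu ^ 3)"
        by (auto simp: abs_mult v0 i power_abs intro!: mult_left_mono simp: power_mult_distrib)
    qed
    also have "\<dots> = 8 * mu ^ 3" using sv by (simp flip: sum_distrib_right)
    finally show ?thesis unfolding v_def b_def .
  qed
  have "(\<Sum>i<n. v i * (a i - c) ^ 2) = (\<Sum>i<n. v i * (a i - b) ^ 2) + 2 * (b - c) * (\<Sum>i<n. v i * (a i - b)) + (b - c) ^ 2 * (\<Sum>i<n. v i)"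
    by (simp add: sum_distrib_left sum_distrib_right sum.distrib[symmetric] power2_eq_square algebra_simps)
  hence B: "(\<Sum>i<n. v i * (a i - b) ^ 2) \<le> (\<Sum>i<n. v i * (a i - c) ^ 2)"
    using svd sv by simp
  have C: "(\<Sum>i<n. v i * (a i - c) ^ 2) \<le> (\<Sum>i<n. vf n w a i 0 * exp (mu * \<bar>x\<bar>) * (a i - c) ^ 2)"
    unfolding v_def c_def by (intro sum_mono mult_right_mono vf_bound[OF pos wn mu]) auto
  have "\<bar>\<Sum>i<n. v i * (a i - b) ^ 3\<bar> \<le> 2 * mu * (\<Sum>i<n. v i * (a i - b) ^ 2)"
    using A by (simp add: sum_distrib_left algebra_simps)
  also have "\<dots> \<le> 2 * mu * (\<Sum>i<n. vf n w a i 0 * exp (mu * \<bar>x\<bar>) * (a i - c) ^ 2)"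
    using B C mu0 by (intro mult_left_mono) auto
  also have "\<dots> = 2 * mu * exp (mu * \<bar>x\<bar>) * (\<Sum>i<n. vf n w a i 0 * (a i - c) ^ 2)"
    by (simp add: sum_distrib_left algebra_simps)
  finally show "\<bar>\<Sum>i<n. vf n w a i x * (a i - abar n w a x) ^ 3\<bar>
          \<le> 2 * mu * exp (mu * \<bar>x\<bar>) * (\<Sum>i<n. vf n w a i 0 * (a i - abar n w a 0) ^ 2)"
    unfolding v_def b_def c_def .
qed


theorem lemmaA2:
  fixes n :: nat and w a :: "nat \<Rightarrow> real"
  assumes w_nonneg: "\<And>i. i < n \<Longrightarrow> w i \<ge> 0"
    and w_not_all_zero: "\<exists>i<n. w i \<noteq> 0"
  shows "convex_on UNIV (Kf n w a)
    \<and> (\<forall>t. (Kf n w a has_real_derivative abar n w a t) (at t))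
    \<and> (\<forall>t. (abar n w a has_real_derivative
              (\<Sum>i<n. vf n w a i t * (a i - abar n w a t) ^ 2)) (at t))
    \<and> (\<forall>t. ((\<lambda>s. \<Sum>i<n. vf n w a i s * (a i - abar n w a s) ^ 2) has_real_derivative
              (\<Sum>i<n. vf n w a i t * (a i - abar n w a t) ^ 3)) (at t))
    \<and> (\<forall>i<n. vf n w a i 0 = w i / (\<Sum>j<n. w j))
    \<and> (\<forall>t. let mu = Max ((\<lambda>i. \<bar>a i - abar n w a 0\<bar>) ` {..<n});
              s2 = (\<Sum>i<n. vf n w a i 0 * (a i - abar n w a 0) ^ 2);
              rem = ln (\<Sum>i<n. w i * exp (a i * t)) - ln (\<Sum>i<n. w i)
                    - (abar n w a 0 * t + 1/2 * s2 * t ^ 2)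
          in \<bar>rem\<bar> \<le> 4/3 * mu ^ 3 * \<bar>t\<bar> ^ 3
             \<and> \<bar>rem\<bar> \<le> 2/3 * gfun (mu * \<bar>t\<bar>) * s2 * \<bar>t\<bar> ^ 2)"
proof -
  have pos: "\<And>t. Rf n w a t > 0" using Rf_pos[OF w_nonneg w_not_all_zero] .
  define S2 where "S2 = (\<lambda>s. \<Sum>i<n. vf n w a i s * (a i - abar n w a s) ^ 2)"
  define S3 where "S3 = (\<lambda>s. \<Sum>i<n. vf n w a i s * (a i - abar n w a s) ^ 3)"
  have rest: "let mu = Max ((\<lambda>i. \<bar>a i - abar n w a 0\<bar>) ` {..<n});
              s2 = (\<Sum>i<n. vf n w a i 0 * (a i - abar n w a 0) ^ 2);
              rem = ln (\<Sum>i<n. w i * exp (a i * t)) - ln (\<Sum>i<n. w i)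
                    - (abar n w a 0 * t + 1/2 * s2 * t ^ 2)
          in \<bar>rem\<bar> \<le> 4/3 * mu ^ 3 * \<bar>t\<bar> ^ 3
             \<and> \<bar>rem\<bar> \<le> 2/3 * gfun (mu * \<bar>t\<bar>) * s2 * \<bar>t\<bar> ^ 2" for t
  proof -
    define mu where "mu = Max ((\<lambda>i. \<bar>a i - abar n w a 0\<bar>) ` {..<n})"
    have mu: "\<bar>a i - abar n w a 0\<bar> \<le> mu" if "i < n" for i
      unfolding mu_def using that by (intro Max_ge) auto
    have mu0: "mu \<ge> 0" using mu w_not_all_zero by (meson abs_ge_zero order_trans)
    define s2 where "s2 = S2 0"
    have s20: "s2 \<ge> 0" unfolding s2_def S2_def
      by (auto intro!: sum_nonneg mult_nonneg_nonneg vf_nonneg[OF w_nonneg pos])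
    define diff where "diff = (\<lambda>m::nat. if m = 0 then Kf n w a else if m = 1 then abar n w a
       else if m = 2 then S2 else S3)"
    have "\<exists>x. \<bar>x\<bar> \<le> \<bar>t\<bar> \<and> Kf n w a t = (\<Sum>m<3. diff m 0 / (fact m) * t ^ m) + diff 3 x / (fact 3) * t ^ 3"
    proof (rule Maclaurin_bi_le)
      show "diff 0 = Kf n w a" by (simp add: diff_def)
      show "\<forall>m x. m < 3 \<and> \<bar>x\<bar> \<le> \<bar>t\<bar> \<longrightarrow> (diff m has_real_derivative diff (Suc m) x) (at x)"
      proof (intro allI impI)
        fix m :: nat and x :: real assume "m < 3 \<and> \<bar>x\<bar> \<le> \<bar>t\<bar>"
        hence "m = 0 \<or> m = 1 \<or> m = 2" by auto
        thus "(diff m has_real_derivative diff (Suc m) x) (at x)"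
          using K_deriv[OF pos] abar_deriv[OF pos] S2_deriv[OF pos]
          by (auto simp: diff_def S2_def S3_def)
      qed
    qed
    then obtain x where x: "\<bar>x\<bar> \<le> \<bar>t\<bar>" and tay: "Kf n w a t = (\<Sum>m<3. diff m 0 / (fact m) * t ^ m) + diff 3 x / (fact 3) * t ^ 3"
      by blast
    define rem where "rem = ln (\<Sum>i<n. w i * exp (a i * t)) - ln (\<Sum>i<n. w i)
                    - (abar n w a 0 * t + 1/2 * s2 * t ^ 2)"
    have K0: "Kf n w a 0 = ln (\<Sum>i<n. w i)" unfolding Kf_def Rf_def by simp
    have "rem = S3 x / 6 * t ^ 3"
      using tay K0 unfolding rem_def s2_def
      by (simp add: diff_def eval_nat_numeral Kf_def Rf_def fact_numeral)
    hence ra: "\<bar>rem\<bar> = \<bar>S3 x\<bar> / 6 * \<bar>t\<bar> ^ 3" by (simp only: abs_mult abs_divide power_abs)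
    have b1: "\<bar>S3 x\<bar> \<le> 8 * mu ^ 3" unfolding S3_def using S3_bounds(1)[OF pos w_nonneg mu] .
    have b2: "\<bar>S3 x\<bar> \<le> 2 * mu * exp (mu * \<bar>x\<bar>) * s2" unfolding S3_def s2_def S2_def
      using S3_bounds(2)[OF pos w_nonneg mu] .
    have "\<bar>S3 x\<bar> * \<bar>t\<bar> ^ 3 \<le> 8 * mu ^ 3 * \<bar>t\<bar> ^ 3" using b1 by (rule mult_right_mono) simp
    hence r1: "\<bar>rem\<bar> \<le> 4/3 * mu ^ 3 * \<bar>t\<bar> ^ 3" using ra by simp
    have "exp (mu * \<bar>x\<bar>) \<le> exp (2 * (mu * \<bar>t\<bar>) + 4 * (mu * \<bar>t\<bar>) ^ 2)"
    proof -
      have "mu * \<bar>x\<bar> \<le> mu * \<bar>t\<bar>" using x mu0 by (rule mult_left_mono)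
      moreover have "mu * \<bar>t\<bar> \<ge> 0" using mu0 by simp
      moreover have "(mu * \<bar>t\<bar>)^2 \<ge> 0" by simp
      ultimately have "mu * \<bar>x\<bar> \<le> 2 * (mu * \<bar>t\<bar>) + 4 * (mu * \<bar>t\<bar>) ^ 2" by linarith
      thus ?thesis by simp
    qed
    hence "\<bar>S3 x\<bar> \<le> 4 * mu * exp (2 * (mu * \<bar>t\<bar>) + 4 * (mu * \<bar>t\<bar>) ^ 2) * s2"
      using b2 mu0 s20
      by (smt (verit, best) exp_gt_zero mult_left_mono mult_nonneg_nonneg mult_right_mono)
    hence "\<bar>rem\<bar> \<le> (4 * mu * exp (2 * (mu * \<bar>t\<bar>) + 4 * (mu * \<bar>t\<bar>) ^ 2) * s2) / 6 * \<bar>t\<bar> ^ 3"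
      unfolding ra by (intro mult_right_mono divide_right_mono) auto
    also have "\<dots> = 2/3 * gfun (mu * \<bar>t\<bar>) * s2 * \<bar>t\<bar> ^ 2"
      unfolding gfun_def by (simp add: eval_nat_numeral algebra_simps)
    finally have r2: "\<bar>rem\<bar> \<le> 2/3 * gfun (mu * \<bar>t\<bar>) * s2 * \<bar>t\<bar> ^ 2" .
    show ?thesis using r1 r2 unfolding Let_def mu_def[symmetric] s2_def[symmetric]
      unfolding S2_def rem_def s2_def by simp
  qed
  show ?thesis
    using K_convex[OF pos w_nonneg] K_deriv[OF pos] abar_deriv[OF pos] S2_deriv[OF pos] vf0 rest
    by blast
qed

end
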